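(* Let $N\ge2$, $K>0$, $k_n=\lfloor Kn\log n\rfloor$, and let $0<b<2K-\frac{1}{\log N}$. Consider the random graph on $\Omega_N$ where distinct $x,y$ with $d(x,y)=k$ are joined independently with probability $\min(c_k/N^{2k},1)$, where $c_{k_n}=C+a\log n\cdot N^{b\log n}$ for all $n$ (constants $C\ge0$, $a>0$) and $c_{k_n}\le c_j\le c_{k_{n+1}}$ for $k_n<j<k_{n+1}$. For $j\ge2$ let $A_{n,j}$ denote the event that the cluster $X_{k_n}=X(B_{k_n})$ of a $k_n$-ball $B_{k_n}$ is joined by an edge to the $(k_{n+j},k_{n+j+1}]$-annulus around $B_{k_n}$. Then there is a positive constant $M$ such that for each $j\ge 2$ $$\limsup_{n\to\infty}\frac{P(A_{n,j})}{M\log n / n^{(Kj-b)\log N}}\le 1,$$ and $\sum_{n=1}^\infty\sum_{j=2}^\infty P(A_{n,j})<\infty$. Hence, with probability $1$, there exists a random $n_0$ such that for all $n\ge n_0$ there are no edges between the cluster $X_{k_n}$ restricted to the $(k_{n-1},k_n]$-annulus and the annuli $(k_{n+2},k_{n+3}]$, $(k_{n+3},k_{n+4}]$, etc.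
   Context: $\Omega_N$ is the set of sequences with entries in $\{0,\dots,N-1\}$, finitely many nonzero; $d(x,y)=\max\{i:x_i\ne y_i\}$ for $x\ne y$, $d(x,x)=0$. A $k$-ball is $\{y:d(x,y)\le k\}$; $B_k$ denotes the $k$-ball containing the zero sequence $\mathbf 0$. The $(j,\ell]$-annulus around a ball $B\subset B_j$ is $\{y: j<d(x,y)\le \ell\}$ for any $x\in B$. Edges are independent. For a $k$-ball $B$, $X(B)$ is the largest connected component of the subgraph induced on $B$ (only edges with both endpoints in $B$), ties broken uniformly at random. *)

theory Defs
  imports "HOL-Probability.Probability"
begin

type_synonym seq = "nat \<Rightarrow> nat"

text \<open>Omega_N: sequences (x_1, x_2, ...) with entries in {0..N-1}, finitely many nonzero.
  Indices start at 1; the unused coordinate 0 is fixed to 0.\<close>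
definition Omega :: "nat \<Rightarrow> seq set" where
  "Omega N = {x. x 0 = 0 \<and> (\<forall>i. x i < N) \<and> finite {i. x i \<noteq> 0}}"

definition ud :: "seq \<Rightarrow> seq \<Rightarrow> nat" where
  "ud x y = (if x = y then 0 else Max {i. x i \<noteq> y i})"

definition zero_seq :: seq where "zero_seq = (\<lambda>_. 0)"

definition zball :: "nat \<Rightarrow> nat \<Rightarrow> seq set" where
  "zball N k = {y \<in> Omega N. ud zero_seq y \<le> k}"

text \<open>(j,l]-annulus around a ball contained in B_j (computed from the centre 0).\<close>
definition annulus :: "nat \<Rightarrow> nat \<Rightarrow> nat \<Rightarrow> seq set" where
  "annulus N j l = {y \<in> Omega N. j < ud zero_seq y \<and> ud zero_seq y \<le> l}"

definition edges :: "nat \<Rightarrow> seq set set" where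
  "edges N = {{x, y} | x y. x \<in> Omega N \<and> y \<in> Omega N \<and> x \<noteq> y}"

definition edist :: "seq set \<Rightarrow> nat" where
  "edist e = Max {i. \<exists>x\<in>e. \<exists>y\<in>e. x i \<noteq> y i}"

definition edge_prob :: "nat \<Rightarrow> (nat \<Rightarrow> real) \<Rightarrow> seq set \<Rightarrow> real" where
  "edge_prob N c e = min (c (edist e) / real N ^ (2 * edist e)) 1"

definition edge_space :: "nat \<Rightarrow> (nat \<Rightarrow> real) \<Rightarrow> (seq set \<Rightarrow> bool) measure" where
  "edge_space N c = PiM (edges N) (\<lambda>e. measure_pmf (bernoulli_pmf (edge_prob N c e)))"

text \<open>Tie-breaking randomness: for each k, an independent uniformly random ranking of B_k.\<close>
definition rankings :: "nat \<Rightarrow> nat \<Rightarrow> (seq \<Rightarrow> nat) set" where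
  "rankings N k = {f. bij_betw f (zball N k) {..<card (zball N k)} \<and> (\<forall>x. x \<notin> zball N k \<longrightarrow> f x = 0)}"

definition tie_space :: "nat \<Rightarrow> (nat \<Rightarrow> seq \<Rightarrow> nat) measure" where
  "tie_space N = PiM UNIV (\<lambda>k. measure_pmf (pmf_of_set (rankings N k)))"

definition rg_space :: "nat \<Rightarrow> (nat \<Rightarrow> real) \<Rightarrow> ((seq set \<Rightarrow> bool) \<times> (nat \<Rightarrow> seq \<Rightarrow> nat)) measure" where
  "rg_space N c = pair_measure (edge_space N c) (tie_space N)"

definition adj :: "(seq set \<Rightarrow> bool) \<Rightarrow> seq \<Rightarrow> seq \<Rightarrow> bool" where
  "adj w x y = (x \<noteq> y \<and> w {x, y})"

definition comp :: "(seq set \<Rightarrow> bool) \<Rightarrow> seq set \<Rightarrow> seq \<Rightarrow> seq set" where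
  "comp w B x = {y. (x, y) \<in> {(u, v). u \<in> B \<and> v \<in> B \<and> adj w u v}\<^sup>*}"

definition largest_comps :: "(seq set \<Rightarrow> bool) \<Rightarrow> seq set \<Rightarrow> seq set set" where
  "largest_comps w B = {C \<in> comp w B ` B. \<forall>C' \<in> comp w B ` B. card C' \<le> card C}"

text \<open>X(B_k): a largest component of B_k; ties broken by the component containing the
  lowest-ranked vertex (under the uniform random ranking t k) among the largest components.
  Since tied components have equal size, this selects uniformly among them.\<close>
definition cluster :: "nat \<Rightarrow> (seq set \<Rightarrow> bool) \<Rightarrow> (nat \<Rightarrow> seq \<Rightarrow> nat) \<Rightarrow> nat \<Rightarrow> seq set" where
  "cluster N w t k = comp w (zball N k)
     (arg_min (t k) (\<lambda>v. v \<in> \<Union>(largest_comps w (zball N k))))"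

definition kseq :: "real \<Rightarrow> nat \<Rightarrow> nat" where
  "kseq K n = nat \<lfloor>K * real n * ln (real n)\<rfloor>"

definition A_event :: "nat \<Rightarrow> (nat \<Rightarrow> real) \<Rightarrow> real \<Rightarrow> nat \<Rightarrow> nat \<Rightarrow>
    ((seq set \<Rightarrow> bool) \<times> (nat \<Rightarrow> seq \<Rightarrow> nat)) set" where
  "A_event N c K n j = {(w, t) \<in> space (rg_space N c).
      \<exists>x \<in> cluster N w t (kseq K n). \<exists>y \<in> annulus N (kseq K (n + j)) (kseq K (n + j + 1)).
        adj w x y}"

end

theory Submission
  imports Defs
begin


lemma ud0_le:
  assumes "finite {i. y i \<noteq> 0}" shows "ud zero_seq y \<le> d \<longleftrightarrow> (\<forall>i>d. y i = 0)"
proof (cases "y = zero_seq")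
  case True then show ?thesis by (simp add: ud_def zero_seq_def)
next
  case False
  have S: "{i. zero_seq i \<noteq> y i} = {i. y i \<noteq> 0}" by (auto simp: zero_seq_def)
  have ne: "{i. y i \<noteq> 0} \<noteq> {}" using False by (auto simp: zero_seq_def fun_eq_iff)
  have eq: "ud zero_seq y = Max {i. y i \<noteq> 0}" using False S by (simp add: ud_def)
  have "(\<forall>a\<in>{i. y i \<noteq> 0}. a \<le> d) \<longleftrightarrow> (\<forall>i>d. y i = 0)"
    using not_le by blast
  then show ?thesis unfolding eq Max_le_iff[OF assms ne] .
qed

lemma ud0_nz:
  assumes "finite {i. y i \<noteq> 0}" "y \<noteq> zero_seq" shows "y (ud zero_seq y) \<noteq> 0"
proof -
  have S: "{i. zero_seq i \<noteq> y i} = {i. y i \<noteq> 0}" by (auto simp: zero_seq_def)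
  have ne: "{i. y i \<noteq> 0} \<noteq> {}" using assms(2) by (auto simp: zero_seq_def fun_eq_iff)
  have eq: "ud zero_seq y = Max {i. y i \<noteq> 0}" using assms(2) S by (simp add: ud_def)
  show ?thesis unfolding eq using Max_in[OF assms(1) ne] by simp
qed

lemma ud0_zero: "ud zero_seq zero_seq = 0" by (simp add: ud_def)

lemma Omega_fin: "y \<in> Omega N \<Longrightarrow> finite {i. y i \<noteq> 0}" by (simp add: Omega_def)

lemma edist_eq:
  assumes x: "x \<in> Omega N" "ud zero_seq x \<le> k" and y: "y \<in> Omega N" "k < ud zero_seq y"
  shows "edist {x, y} = ud zero_seq y"
proof -
  let ?d = "ud zero_seq y"
  have S: "{i. \<exists>u\<in>{x,y}. \<exists>v\<in>{x,y}. u i \<noteq> v i} = {i. x i \<noteq> y i}" by auto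
  have x0: "\<forall>i>k. x i = 0" using ud0_le[OF Omega_fin[OF x(1)]] x(2) by blast
  have y0: "\<forall>i>?d. y i = 0" using ud0_le[OF Omega_fin[OF y(1)]] by blast
  have ynz: "y \<noteq> zero_seq" using y(2) ud0_zero by auto
  have yd: "y ?d \<noteq> 0" using ud0_nz[OF Omega_fin[OF y(1)] ynz] .
  have le: "\<And>i. x i \<noteq> y i \<Longrightarrow> i \<le> ?d"
  proof (rule ccontr)
    fix i assume "x i \<noteq> y i" "\<not> i \<le> ?d"
    then show False using x0 y0 y(2) by auto
  qed
  have fin: "finite {i. x i \<noteq> y i}" by (rule finite_subset[of _ "{..?d}"]) (auto dest: le)
  have "Max {i. x i \<noteq> y i} = ?d"
    by (rule Max_eqI[OF fin]) (use le yd x0 y(2) in auto)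
  then show ?thesis unfolding edist_def S .
qed

lemma zball_sub:
  "zball N d \<subseteq> (\<lambda>f i. if i \<in> {1..d} then f i else 0) ` (PiE {1..d} (\<lambda>_. {..<N}))"
proof
  fix y assume y: "y \<in> zball N d"
  then have yO: "y \<in> Omega N" and yd: "ud zero_seq y \<le> d" by (auto simp: zball_def)
  have y0: "\<forall>i>d. y i = 0" using ud0_le[OF Omega_fin[OF yO]] yd by blast
  have "y = (\<lambda>i. if i \<in> {1..d} then restrict y {1..d} i else 0)"
  proof
    fix i show "y i = (if i \<in> {1..d} then restrict y {1..d} i else 0)"
      using y0 yO by (cases "i = 0") (auto simp: Omega_def)
  qed
  moreover have "restrict y {1..d} \<in> PiE {1..d} (\<lambda>_. {..<N})" using yO by (auto simp: Omega_def)
  ultimately show "y \<in> (\<lambda>f i. if i \<in> {1..d} then f i else 0) ` (PiE {1..d} (\<lambda>_. {..<N}))" by blast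
qed

lemma finite_zball: "finite (zball N d)"
  by (rule finite_subset[OF zball_sub]) (auto intro!: finite_PiE)

lemma card_zball_le: "card (zball N d) \<le> N ^ d"
proof -
  have "card (zball N d) \<le> card ((\<lambda>f i. if i \<in> {1..d} then f i else 0) ` (PiE {1..d} (\<lambda>_. {..<N})))"
    by (rule card_mono[OF _ zball_sub]) (auto intro!: finite_PiE)
  also have "\<dots> \<le> card (PiE {1..d} (\<lambda>_. {..<N}))" by (rule card_image_le) (auto intro!: finite_PiE)
  also have "\<dots> = N ^ d" by (simp add: card_PiE)
  finally show ?thesis .
qed

lemma zero_in_zball: "zero_seq \<in> zball N k" if "N \<ge> 1"
  using that by (simp add: zball_def Omega_def zero_seq_def ud0_zero[unfolded zero_seq_def])

lemma annulus_sub: "annulus N j l \<subseteq> zball N l" by (auto simp: annulus_def zball_def)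

lemma comp_self: "x \<in> comp w B x" by (simp add: comp_def)

lemma comp_sub: assumes "x \<in> B" shows "comp w B x \<subseteq> B"
proof
  fix y assume "y \<in> comp w B x"
  then have "(x, y) \<in> {(u, v). u \<in> B \<and> v \<in> B \<and> adj w u v}\<^sup>*" by (simp add: comp_def)
  then show "y \<in> B" by (induct rule: rtrancl_induct) (use assms in auto)
qed

lemma cluster_sub:
  assumes "N \<ge> 1" shows "cluster N w t k \<subseteq> zball N k"
proof -
  let ?B = "zball N k"
  let ?S = "comp w ?B ` ?B"
  have finS: "finite ?S" using finite_zball by auto
  have neS: "?S \<noteq> {}" using zero_in_zball[OF assms] by auto
  define m where "m = Max (card ` ?S)"
  have "m \<in> card ` ?S" unfolding m_def using finS neS by (intro Max_in) auto
  then obtain u where u: "u \<in> ?B" "card (comp w ?B u) = m" by auto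
  have "\<forall>C' \<in> ?S. card C' \<le> m" unfolding m_def using finS by auto
  then have "comp w ?B u \<in> largest_comps w ?B" using u by (auto simp: largest_comps_def)
  then have P: "u \<in> \<Union>(largest_comps w ?B)" using comp_self[of u w ?B] by blast
  let ?x0 = "arg_min (t k) (\<lambda>v. v \<in> \<Union>(largest_comps w ?B))"
  have "?x0 \<in> \<Union>(largest_comps w ?B)" by (rule arg_min_natI[of _ u]) (rule P)
  then obtain v where v: "v \<in> ?B" "?x0 \<in> comp w ?B v" by (auto simp: largest_comps_def)
  then have "?x0 \<in> ?B" using comp_sub by blast
  then show ?thesis unfolding cluster_def by (rule comp_sub)
qed

lemma cluster_cong:
  assumes "\<forall>u\<in>zball N k. \<forall>v\<in>zball N k. adj w u v = adj w' u v" and "t k = t' k"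
  shows "cluster N w t k = cluster N w' t' k"
proof -
  have R: "{(u, v). u \<in> zball N k \<and> v \<in> zball N k \<and> adj w u v} =
           {(u, v). u \<in> zball N k \<and> v \<in> zball N k \<and> adj w' u v}" using assms(1) by auto
  have "comp w (zball N k) = comp w' (zball N k)" unfolding comp_def R ..
  then have "largest_comps w (zball N k) = largest_comps w' (zball N k)"
    unfolding largest_comps_def by simp
  then show ?thesis unfolding cluster_def using \<open>comp w _ = _\<close> assms(2) by simp
qed



lemma zball_Omega: "zball N k \<subseteq> Omega N" by (auto simp: zball_def)
lemma annulus_Omega: "annulus N j l \<subseteq> Omega N" by (auto simp: annulus_def)

lemma meas_fst_comp:
  assumes "e \<in> edges N"
  shows "{z \<in> space (rg_space N c). fst z e = b} \<in> sets (rg_space N c)"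
proof -
  have m: "(\<lambda>z. fst z e) \<in> measurable (rg_space N c) (measure_pmf (bernoulli_pmf (edge_prob N c e)))"
    unfolding rg_space_def edge_space_def
    by (rule measurable_compose[OF measurable_fst measurable_component_singleton]) (rule assms)
  have "(\<lambda>z. fst z e) -` {b} \<inter> space (rg_space N c) \<in> sets (rg_space N c)"
    by (rule measurable_sets[OF m]) simp
  moreover have "(\<lambda>z. fst z e) -` {b} \<inter> space (rg_space N c) = {z \<in> space (rg_space N c). fst z e = b}"
    by auto
  ultimately show ?thesis by simp
qed

lemma meas_snd_comp:
  shows "{z \<in> space (rg_space N c). snd z k \<in> S} \<in> sets (rg_space N c)"
proof -
  have m: "(\<lambda>z. snd z k) \<in> measurable (rg_space N c) (measure_pmf (pmf_of_set (rankings N k)))"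
    unfolding rg_space_def tie_space_def
    by (rule measurable_compose[OF measurable_snd measurable_component_singleton]) simp
  have "(\<lambda>z. snd z k) -` S \<inter> space (rg_space N c) \<in> sets (rg_space N c)"
    by (rule measurable_sets[OF m]) simp
  moreover have "(\<lambda>z. snd z k) -` S \<inter> space (rg_space N c) = {z \<in> space (rg_space N c). snd z k \<in> S}"
    by auto
  ultimately show ?thesis by simp
qed

definition Qp :: "nat \<Rightarrow> nat \<Rightarrow> seq set \<Rightarrow> (seq set \<Rightarrow> bool) \<Rightarrow> (nat \<Rightarrow> seq \<Rightarrow> nat) \<Rightarrow> bool" where
  "Qp N k L w t = (\<exists>x \<in> cluster N w t k. \<exists>y \<in> L. adj w x y)"

lemma Qp_cong:
  assumes N: "N \<ge> 1" and F: "\<forall>e\<in>{{u, v} |u v. u \<in> zball N k \<union> L \<and> v \<in> zball N k \<union> L \<and> u \<noteq> v}. w e = w' e"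
    and t: "t k = t' k"
  shows "Qp N k L w t = Qp N k L w' t'"
proof -
  let ?V = "zball N k \<union> L"
  have adjV: "adj w u v = adj w' u v" if "u \<in> ?V" "v \<in> ?V" for u v
    using F that unfolding adj_def by blast
  have "cluster N w t k = cluster N w' t' k"
    by (rule cluster_cong) (use adjV t in auto)
  moreover have "cluster N w t k \<subseteq> ?V" using cluster_sub[OF N] by blast
  ultimately show ?thesis unfolding Qp_def using adjV by (smt (verit) UnI2 subset_iff)
qed

lemma Qp_meas:
  assumes N: "N \<ge> 1" and L: "finite L" "L \<subseteq> Omega N"
  shows "{z \<in> space (rg_space N c). Qp N k L (fst z) (snd z)} \<in> sets (rg_space N c)"
proof -
  let ?V = "zball N k \<union> L"
  let ?F = "{{u, v} |u v. u \<in> ?V \<and> v \<in> ?V \<and> u \<noteq> v}"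
  let ?Sp = "space (rg_space N c)"
  have finV: "finite ?V" using L finite_zball by auto
  have "?F \<subseteq> (\<lambda>(u,v). {u,v}) ` (?V \<times> ?V)" by auto
  then have finF: "finite ?F" using finV by (meson finite_SigmaI finite_imageI finite_subset)
  have FE: "?F \<subseteq> edges N" using L zball_Omega unfolding edges_def by blast
  define T where "T g = {r. \<exists>z\<in>?Sp. Qp N k L (fst z) (snd z) \<and> (\<forall>e\<in>?F. fst z e = g e) \<and> snd z k = r}" for g
  have eq: "{z \<in> ?Sp. Qp N k L (fst z) (snd z)} =
    {z \<in> ?Sp. \<exists>g\<in>PiE ?F (\<lambda>_. UNIV). (\<forall>e\<in>?F. fst z e = g e) \<and> snd z k \<in> T g}"
  proof (intro set_eqI iffI)
    fix z assume z: "z \<in> {z \<in> ?Sp. Qp N k L (fst z) (snd z)}"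
    show "z \<in> {z \<in> ?Sp. \<exists>g\<in>PiE ?F (\<lambda>_. UNIV). (\<forall>e\<in>?F. fst z e = g e) \<and> snd z k \<in> T g}"
      using z unfolding T_def by (intro CollectI conjI bexI[of _ "restrict (fst z) ?F"]) auto
  next
    fix z assume z: "z \<in> {z \<in> ?Sp. \<exists>g\<in>PiE ?F (\<lambda>_. UNIV). (\<forall>e\<in>?F. fst z e = g e) \<and> snd z k \<in> T g}"
    then obtain g where zs: "z \<in> ?Sp" and g: "\<forall>e\<in>?F. fst z e = g e" "snd z k \<in> T g" by auto
    then obtain z' where z': "Qp N k L (fst z') (snd z')" "\<forall>e\<in>?F. fst z' e = g e" "snd z' k = snd z k"
      unfolding T_def by auto
    have "Qp N k L (fst z') (snd z') = Qp N k L (fst z) (snd z)"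
      by (rule Qp_cong[OF N]) (use g z' in auto)
    then show "z \<in> {z \<in> ?Sp. Qp N k L (fst z) (snd z)}" using z' zs by auto
  qed
  show ?thesis unfolding eq
  proof (rule sets.sets_Collect_finite_Ex)
    show "finite (PiE ?F (\<lambda>_. UNIV :: bool set))" using finF by (intro finite_PiE) auto
  next
    fix g :: "seq set \<Rightarrow> bool"
    have A1: "{z \<in> ?Sp. \<forall>e\<in>?F. fst z e = g e} \<in> sets (rg_space N c)"
    proof (cases "?F = {}")
      case True show ?thesis unfolding True by simp
    next
      case False
      show ?thesis
        by (rule sets.sets_Collect_finite_All'[OF _ finF False]) (use FE meas_fst_comp in blast)
    qed
    show "{z \<in> ?Sp. (\<forall>e\<in>?F. fst z e = g e) \<and> snd z k \<in> T g} \<in> sets (rg_space N c)"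
      by (rule sets.sets_Collect_conj[OF meas_snd_comp A1])
  qed
qed

lemma finite_annulus: "finite (annulus N j l)"
  using finite_subset[OF annulus_sub finite_zball] .

lemma A_event_eq: "A_event N c K n j =
   {z \<in> space (rg_space N c). Qp N (kseq K n) (annulus N (kseq K (n + j)) (kseq K (n + j + 1))) (fst z) (snd z)}"
  proof (intro set_eqI)
  fix z :: "(seq set \<Rightarrow> bool) \<times> (nat \<Rightarrow> seq \<Rightarrow> nat)"
  show "z \<in> A_event N c K n j \<longleftrightarrow> z \<in> {z \<in> space (rg_space N c). Qp N (kseq K n) (annulus N (kseq K (n + j)) (kseq K (n + j + 1))) (fst z) (snd z)}"
    by (cases z) (simp add: A_event_def Qp_def)
qed

lemma A_event_meas: assumes "N \<ge> 1" shows "A_event N c K n j \<in> sets (rg_space N c)"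
  unfolding A_event_eq by (rule Qp_meas[OF assms finite_annulus annulus_Omega])



lemma prob_edge: "prob_space (edge_space N c)"
  unfolding edge_space_def by (rule prob_space_PiM) (rule prob_space_measure_pmf)

lemma prob_tie: "prob_space (tie_space N)"
  unfolding tie_space_def by (rule prob_space_PiM) (rule prob_space_measure_pmf)

lemma prob_rg: "prob_space (rg_space N c)"
  unfolding rg_space_def by (rule prob_space_pair[OF prob_edge prob_tie])

context begin
interpretation pmf_as_function .
lemma pmf_bern_True: "pmf (bernoulli_pmf p) True = min 1 (max 0 p)"
  by transfer simp
end

lemma measure_edge:
  assumes e: "e \<in> edges N"
  shows "measure (rg_space N c) {z \<in> space (rg_space N c). fst z e} = pmf (bernoulli_pmf (edge_prob N c e)) True"
proof -
  interpret T: prob_space "tie_space N" by (rule prob_tie)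
  interpret E: prob_space "edge_space N c" by (rule prob_edge)
  let ?M = "measure_pmf (bernoulli_pmf (edge_prob N c e))"
  have me: "(\<lambda>w. w e) \<in> measurable (edge_space N c) ?M"
    unfolding edge_space_def by (rule measurable_component_singleton) (rule e)
  have S: "{w \<in> space (edge_space N c). w e} \<in> sets (edge_space N c)"
  proof -
    have "(\<lambda>w. w e) -` {True} \<inter> space (edge_space N c) \<in> sets (edge_space N c)"
      by (rule measurable_sets[OF me]) simp
    moreover have "(\<lambda>w. w e) -` {True} \<inter> space (edge_space N c) = {w \<in> space (edge_space N c). w e}" by auto
    ultimately show ?thesis by simp
  qed
  have eq: "{z \<in> space (rg_space N c). fst z e} = {w \<in> space (edge_space N c). w e} \<times> space (tie_space N)"
    unfolding rg_space_def by (auto simp: space_pair_measure)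
  have "emeasure (rg_space N c) {z \<in> space (rg_space N c). fst z e}
        = emeasure (edge_space N c) {w \<in> space (edge_space N c). w e} * emeasure (tie_space N) (space (tie_space N))"
    unfolding eq unfolding rg_space_def by (rule T.emeasure_pair_measure_Times[OF S]) simp
  also have "\<dots> = emeasure (edge_space N c) {w \<in> space (edge_space N c). w e}" using T.emeasure_space_1 by simp
  finally have 1: "measure (rg_space N c) {z \<in> space (rg_space N c). fst z e} = measure (edge_space N c) {w \<in> space (edge_space N c). w e}"
    unfolding measure_def by (rule arg_cong)
  have "measure (edge_space N c) {w \<in> space (edge_space N c). w e} = measure (edge_space N c) ((\<lambda>w. w e) -` {True} \<inter> space (edge_space N c))"
    by (intro arg_cong[where f="measure (edge_space N c)"]) blast
  also have "\<dots> = measure (distr (edge_space N c) ?M (\<lambda>w. w e)) {True}"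
    by (rule measure_distr[symmetric, OF me]) simp
  also have "distr (edge_space N c) ?M (\<lambda>w. w e) = ?M"
    unfolding edge_space_def by (rule distr_PiM_component[OF prob_space_measure_pmf e])
  also have "measure ?M {True} = pmf (bernoulli_pmf (edge_prob N c e)) True" by (rule measure_pmf_single)
  finally show ?thesis using 1 by simp
qed

lemma geom_le:
  fixes x :: real assumes x0: "0 \<le> x" and x1: "x \<le> 1/2" and mm: "m \<le> m'"
  shows "(\<Sum>d\<in>{m<..m'}. x ^ d) \<le> x ^ m - x ^ m'"
  using mm
proof (induction m' rule: dec_induct)
  case base then show ?case by simp
next
  case (step n)
  have ins: "{m<..Suc n} = insert (Suc n) {m<..n}" using step(1) by auto
  have "(\<Sum>d\<in>{m<..Suc n}. x ^ d) = x ^ Suc n + (\<Sum>d\<in>{m<..n}. x ^ d)"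
    unfolding ins by (subst sum.insert) auto
  moreover have "(2*x) * x^n \<le> 1 * x^n" by (rule mult_right_mono) (use x0 x1 in auto)
  then have "2 * x ^ Suc n \<le> x ^ n" by (simp add: mult.assoc)
  ultimately show ?case using step(3) by linarith
qed

lemma A_bound:
  assumes N: "N \<ge> 2" and cs: "\<And>d. m < d \<Longrightarrow> d \<le> m' \<Longrightarrow> c d \<le> cs" and cs0: "cs \<ge> 0" and km: "k \<le> m"
  shows "measure (rg_space N c) {z \<in> space (rg_space N c). Qp N k (annulus N m m') (fst z) (snd z)}
         \<le> real N ^ k * cs * (1 / real N) ^ m"
proof -
  interpret P: prob_space "rg_space N c" by (rule prob_rg)
  let ?Sp = "space (rg_space N c)"
  let ?B = "zball N k" and ?Ann = "annulus N m m'"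
  let ?G = "(\<lambda>(x,y). {x,y}) ` (?B \<times> ?Ann)"
  let ?x = "1 / real N"
  have N1: "N \<ge> 1" using N by simp
  have finB: "finite ?B" by (rule finite_zball)
  have finA: "finite ?Ann" by (rule finite_annulus)
  have finG: "finite ?G" using finB finA by simp
  have xy: "x \<in> Omega N" "ud zero_seq x \<le> m" "y \<in> Omega N" "m < ud zero_seq y" "ud zero_seq y \<le> m'"
    if "x \<in> ?B" "y \<in> ?Ann" for x y
    using that km by (auto simp: zball_def annulus_def)
  have GE: "?G \<subseteq> edges N"
  proof
    fix e assume "e \<in> ?G"
    then obtain x y where e: "e = {x,y}" "x \<in> ?B" "y \<in> ?Ann" by auto
    then have "x \<noteq> y" using xy[OF e(2,3)] by auto
    then show "e \<in> edges N" using e xy[OF e(2,3)] unfolding edges_def by blast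
  qed
  have Gs: "{z \<in> ?Sp. fst z e} \<in> sets (rg_space N c)" if "e \<in> ?G" for e
    using meas_fst_comp[of e N c True] GE that by auto
  have sub: "{z \<in> ?Sp. Qp N k ?Ann (fst z) (snd z)} \<subseteq> (\<Union>e\<in>?G. {z \<in> ?Sp. fst z e})"
  proof
    fix z assume z: "z \<in> {z \<in> ?Sp. Qp N k ?Ann (fst z) (snd z)}"
    then obtain x y where "x \<in> cluster N (fst z) (snd z) k" "y \<in> ?Ann" "adj (fst z) x y"
      unfolding Qp_def by auto
    moreover have "x \<in> ?B" using cluster_sub[OF N1] calculation(1) by blast
    ultimately show "z \<in> (\<Union>e\<in>?G. {z \<in> ?Sp. fst z e})" using z unfolding adj_def by blast
  qed
  have S_le: "(\<Sum>y\<in>?Ann. ?x ^ (2 * ud zero_seq y)) \<le> ?x ^ m"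
  proof -
    have "(\<Sum>y\<in>?Ann. ?x ^ (2 * ud zero_seq y)) =
          (\<Sum>d\<in>{m<..m'}. \<Sum>y\<in>{y. y \<in> ?Ann \<and> ud zero_seq y = d}. ?x ^ (2 * ud zero_seq y))"
      by (rule sum.group[symmetric, OF finA]) (auto simp: annulus_def)
    also have "\<dots> = (\<Sum>d\<in>{m<..m'}. real (card {y. y \<in> ?Ann \<and> ud zero_seq y = d}) * ?x ^ (2 * d))"
      by (rule sum.cong) auto
    also have "\<dots> \<le> (\<Sum>d\<in>{m<..m'}. real N ^ d * ?x ^ (2 * d))"
    proof (rule sum_mono)
      fix d
      have "{y. y \<in> ?Ann \<and> ud zero_seq y = d} \<subseteq> zball N d" by (auto simp: annulus_def zball_def)
      then have "card {y. y \<in> ?Ann \<and> ud zero_seq y = d} \<le> card (zball N d)"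
        by (rule card_mono[OF finite_zball])
      also have "\<dots> \<le> N ^ d" by (rule card_zball_le)
      finally have "real (card {y. y \<in> ?Ann \<and> ud zero_seq y = d}) \<le> real (N ^ d)"
        by (rule of_nat_mono)
      then have "real (card {y. y \<in> ?Ann \<and> ud zero_seq y = d}) \<le> real N ^ d"
        by (simp only: of_nat_power)
      then show "real (card {y. y \<in> ?Ann \<and> ud zero_seq y = d}) * ?x ^ (2 * d) \<le> real N ^ d * ?x ^ (2 * d)"
        by (rule mult_right_mono) simp
    qed
    also have "\<dots> = (\<Sum>d\<in>{m<..m'}. ?x ^ d)"
    proof (rule sum.cong)
      fix d
      have "real N ^ d * ?x ^ (2 * d) = (real N ^ d * ?x ^ d) * ?x ^ d"
        by (simp add: mult_2 power_add)
      moreover have "real N * ?x = 1" using N by simp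
      then have "(real N * ?x) ^ d = 1" by simp
      then have "real N ^ d * ?x ^ d = 1" by (simp only: power_mult_distrib)
      ultimately show "real N ^ d * ?x ^ (2 * d) = ?x ^ d" by simp
    qed simp
    also have "\<dots> \<le> ?x ^ m"
    proof (cases "m \<le> m'")
      case True
      have "(\<Sum>d\<in>{m<..m'}. ?x ^ d) \<le> ?x ^ m - ?x ^ m'" by (rule geom_le[OF _ _ True]) (use N in auto)
      moreover have "0 \<le> ?x ^ m'" by simp
      ultimately show ?thesis by linarith
    next
      case False then show ?thesis by simp
    qed
    finally show ?thesis .
  qed
  have "measure (rg_space N c) {z \<in> ?Sp. Qp N k ?Ann (fst z) (snd z)} \<le> measure (rg_space N c) (\<Union>e\<in>?G. {z \<in> ?Sp. fst z e})"
    by (rule P.finite_measure_mono[OF sub]) (rule sets.finite_UN[OF finG Gs])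
  also have "\<dots> \<le> (\<Sum>e\<in>?G. measure (rg_space N c) {z \<in> ?Sp. fst z e})"
    by (rule measure_UNION_le[OF finG Gs])
  also have "\<dots> = (\<Sum>e\<in>?G. pmf (bernoulli_pmf (edge_prob N c e)) True)"
    by (rule sum.cong) (use GE measure_edge in auto)
  also have "\<dots> \<le> (\<Sum>p\<in>?B \<times> ?Ann. pmf (bernoulli_pmf (edge_prob N c ((\<lambda>(x,y). {x,y}) p))) True)"
    using sum_image_le[OF finite_SigmaI[OF finB finA], of "\<lambda>e. pmf (bernoulli_pmf (edge_prob N c e)) True" "\<lambda>(x,y). {x,y}"]
    by (simp add: o_def)
  also have "\<dots> \<le> (\<Sum>p\<in>?B \<times> ?Ann. cs * ?x ^ (2 * ud zero_seq (snd p)))"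
  proof (rule sum_mono)
    fix p assume p: "p \<in> ?B \<times> ?Ann"
    then obtain x y where pxy: "p = (x,y)" "x \<in> ?B" "y \<in> ?Ann" by auto
    note h = xy[OF pxy(2,3)]
    let ?d = "ud zero_seq y"
    have ed: "edist {x,y} = ?d" by (rule edist_eq[OF h(1,2) h(3,4)])
    have cd: "c ?d \<le> cs" using cs h(4,5) by simp
    have Npos: "real N ^ (2 * ?d) > 0" using N by simp
    have "edge_prob N c {x,y} \<le> c ?d / real N ^ (2 * ?d)" unfolding edge_prob_def ed by simp
    also have "\<dots> \<le> cs / real N ^ (2 * ?d)" using cd Npos by (simp add: divide_right_mono)
    also have "\<dots> = cs * ?x ^ (2 * ?d)" by (simp add: power_one_over)
    finally have le: "edge_prob N c {x,y} \<le> cs * ?x ^ (2 * ?d)" .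
    have nn: "0 \<le> cs * ?x ^ (2 * ?d)" using cs0 by simp
    show "pmf (bernoulli_pmf (edge_prob N c ((\<lambda>(x,y). {x,y}) p))) True \<le> cs * ?x ^ (2 * ud zero_seq (snd p))"
      unfolding pmf_bern_True using le nn pxy(1) by auto
  qed
  also have "\<dots> = (\<Sum>x\<in>?B. \<Sum>y\<in>?Ann. cs * ?x ^ (2 * ud zero_seq y))"
    by (subst sum.cartesian_product) (simp add: case_prod_beta)
  also have "\<dots> = real (card ?B) * (cs * (\<Sum>y\<in>?Ann. ?x ^ (2 * ud zero_seq y)))"
    by (simp add: sum_distrib_left)
  also have "\<dots> \<le> real (card ?B) * (cs * ?x ^ m)"
    using mult_left_mono[OF mult_left_mono[OF S_le cs0], of "real (card ?B)"] by simp
  also have "\<dots> \<le> real N ^ k * (cs * ?x ^ m)"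
  proof (rule mult_right_mono)
    have "real (card ?B) \<le> real (N ^ k)" by (rule of_nat_mono[OF card_zball_le])
    then show "real (card ?B) \<le> real N ^ k" by (simp only: of_nat_power)
  qed (use cs0 in simp)
  finally show ?thesis by (simp only: mult.assoc)
qed



lemma nlogn_nonneg: "0 \<le> real n * ln (real n)"
  by (cases "n = 0") auto

lemma nlogn_mono: assumes "n \<le> m" shows "real n * ln (real n) \<le> real m * ln (real m)"
proof (cases "n = 0")
  case True then show ?thesis using nlogn_nonneg[of m] by simp
next
  case False
  then show ?thesis using assms by (intro mult_mono) auto
qed

lemma kseq_mono: assumes "K \<ge> 0" "n \<le> m" shows "kseq K n \<le> kseq K m"
proof -
  have "K * real n * ln (real n) \<le> K * real m * ln (real m)"
    using mult_left_mono[OF nlogn_mono[OF assms(2)] assms(1)] by (simp add: mult.assoc)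
  then show ?thesis unfolding kseq_def by (intro nat_mono floor_mono)
qed

lemma kseq_le: assumes "K \<ge> 0" shows "real (kseq K n) \<le> K * real n * ln (real n)"
proof -
  have y: "0 \<le> K * real n * ln (real n)" using mult_nonneg_nonneg[OF assms nlogn_nonneg[of n]] by (simp add: mult.assoc)
  then show ?thesis unfolding kseq_def by simp
qed

lemma kseq_ge: assumes "K \<ge> 0" shows "real (kseq K n) \<ge> K * real n * ln (real n) - 1"
proof -
  have y: "0 \<le> K * real n * ln (real n)" using mult_nonneg_nonneg[OF assms nlogn_nonneg[of n]] by (simp add: mult.assoc)
  then show ?thesis unfolding kseq_def by linarith
qed

lemma powr_ln_swap: fixes x y b :: real assumes "x > 0" "y > 0" shows "x powr (b * ln y) = y powr (b * ln x)"
  unfolding powr_def using assms by (simp add: mult.commute[of "ln y"])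

lemma exp_bound:
  assumes N: "N \<ge> 2" and K: "K > 0" and n: "1 \<le> n" "n \<le> m"
  shows "real N ^ kseq K n * (1 / real N) ^ kseq K m \<le> real N * real m powr (- (K * ln (real N) * real (m - n)))"
proof -
  let ?kn = "real (kseq K n)" and ?km = "real (kseq K m)"
  have Np: "real N > 0" using N by simp
  have mp: "real m > 0" using n by simp
  have "real N ^ kseq K n * (1 / real N) ^ kseq K m = real N powr (?kn - ?km)"
    using Np by (simp add: powr_diff powr_realpow power_one_over divide_inverse power_inverse)
  also have "?kn - ?km \<le> 1 - K * real (m - n) * ln (real m)"
  proof -
    have a: "?kn \<le> K * real n * ln (real n)" using kseq_le K by simp
    have b: "?km \<ge> K * real m * ln (real m) - 1" using kseq_ge K by simp
    have "real n * ln (real n) \<le> real n * ln (real m)" using n by (intro mult_left_mono) auto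
    then have "K * real n * ln (real n) \<le> K * real n * ln (real m)"
      using K by (simp add: mult.assoc mult_left_mono)
    moreover have "real (m - n) = real m - real n" using n by simp
    ultimately show ?thesis using a b by (simp add: algebra_simps)
  qed
  then have "real N powr (?kn - ?km) \<le> real N powr (1 - K * real (m - n) * ln (real m))"
    using N by (intro powr_mono) auto
  also have "\<dots> = real N * real m powr (- (K * ln (real N) * real (m - n)))"
  proof -
    have e1: "real N powr (K * real (m-n) * ln (real m)) = real m powr (K * ln (real N) * real (m-n))"
      using Np mp unfolding powr_def by (simp add: mult_ac)
    have "real N powr (1 - K * real (m - n) * ln (real m)) = real N / real N powr (K * real (m-n) * ln (real m))"
      using Np by (simp add: powr_diff)
    also have "\<dots> = real N * real m powr (-(K * ln (real N) * real (m-n)))"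
      unfolding e1 by (simp add: powr_minus divide_inverse)
    finally show ?thesis .
  qed
  finally show ?thesis .
qed

definition betaD :: "nat \<Rightarrow> real \<Rightarrow> real" where "betaD N b = b * ln (real N)"
definition alphaD :: "nat \<Rightarrow> real \<Rightarrow> real" where "alphaD N K = K * ln (real N)"
definition DD :: "nat \<Rightarrow> real \<Rightarrow> real \<Rightarrow> real \<Rightarrow> real" where "DD N b C a = C + 2 * 2 powr (betaD N b) * a"

context
  fixes N :: nat and K b C a :: real and c :: "nat \<Rightarrow> real"
  assumes N2: "N \<ge> 2" and Kp: "K > 0"
    and bp: "0 < b"
    and C0: "C \<ge> 0" and ap: "a > 0"
    and H7: "\<forall>n\<ge>1. c (kseq K n) = C + a * ln (real n) * real N powr (b * ln (real n))"
    and H8: "\<forall>n\<ge>1. \<forall>j. kseq K n < j \<and> j < kseq K (n + 1) \<longrightarrow>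
             c (kseq K n) \<le> c j \<and> c j \<le> c (kseq K (n + 1))"
begin

lemma c_nonneg: "n \<ge> 1 \<Longrightarrow> c (kseq K n) \<ge> 0"
  using H7 C0 ap by (simp add: mult_nonneg_nonneg)

lemma A_prob1:
  assumes j: "j \<ge> 1"
  shows "measure (rg_space N c) (A_event N c K n j)
     \<le> real N ^ kseq K n * c (kseq K (n + j + 1)) * (1 / real N) ^ kseq K (n + j)"
  unfolding A_event_eq
proof (rule A_bound[OF N2])
  fix d assume d: "kseq K (n + j) < d" "d \<le> kseq K (n + j + 1)"
  show "c d \<le> c (kseq K (n + j + 1))"
  proof (cases "d = kseq K (n + j + 1)")
    case True then show ?thesis by simp
  next
    case False
    then show ?thesis using H8[rule_format, of "n + j" d] d j by simp
  qed
next
  show "0 \<le> c (kseq K (n + j + 1))" by (rule c_nonneg) simp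
next
  show "kseq K n \<le> kseq K (n + j)" using Kp by (intro kseq_mono) auto
qed


lemma lnN: "ln (real N) > 0" using N2 by simp
lemma beta_pos: "betaD N b > 0" unfolding betaD_def using bp lnN by simp
lemma alpha_pos: "alphaD N K > 0" unfolding alphaD_def using Kp lnN by simp
lemma DD_pos: "DD N b C a > 0" unfolding DD_def using C0 ap by (simp add: add_nonneg_pos)

lemma c_bound:
  assumes m: "m \<ge> 3"
  shows "c (kseq K (m + 1)) \<le> DD N b C a * ln (real m) * real m powr betaD N b"
proof -
  have mp: "real m > 0" using m by simp
  have eq: "c (kseq K (m + 1)) = C + a * ln (real (m + 1)) * real (m + 1) powr betaD N b"
    using H7[rule_format, of "m + 1"] powr_ln_swap[of "real N" "real (m+1)" b] N2
    by (simp add: betaD_def)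
  have l1: "ln (real m) \<ge> 1"
  proof -
    have "exp 1 \<le> (3::real)" using exp_le by linarith
    also have "\<dots> \<le> real m" using m by simp
    finally show ?thesis using mp by (simp add: ln_ge_iff)
  qed
  have p1: "real m powr betaD N b \<ge> 1" using beta_pos m by (simp add: ge_one_powr_ge_zero)
  have l2: "ln (real (m + 1)) \<le> 2 * ln (real m)"
  proof -
    have "3 * real m \<le> real m * real m" using m by (intro mult_right_mono) auto
    moreover have "real m \<ge> 3" using m by simp
    ultimately have "real (m + 1) \<le> real m * real m" by linarith
    then have "ln (real (m + 1)) \<le> ln (real m * real m)" using mp by simp
    also have "\<dots> = 2 * ln (real m)" using mp by (simp add: ln_mult)
    finally show ?thesis .
  qed
  have p2: "real (m + 1) powr betaD N b \<le> 2 powr betaD N b * real m powr betaD N b"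
  proof -
    have "real (m + 1) powr betaD N b \<le> (2 * real m) powr betaD N b"
      using beta_pos m by (intro powr_mono2) auto
    also have "\<dots> = 2 powr betaD N b * real m powr betaD N b" by (simp add: powr_mult)
    finally show ?thesis .
  qed
  have "C \<le> C * (ln (real m) * real m powr betaD N b)"
  proof -
    have "1 * 1 \<le> ln (real m) * real m powr betaD N b" using mult_mono[OF l1 p1] l1 by simp
    then show ?thesis using mult_left_mono[OF _ C0, of 1 "ln (real m) * real m powr betaD N b"] by simp
  qed
  moreover have "a * ln (real (m + 1)) * real (m + 1) powr betaD N b \<le> a * (2 * ln (real m)) * (2 powr betaD N b * real m powr betaD N b)"
    using l2 p2 ap l1 by (intro mult_mono) auto
  moreover have "DD N b C a * ln (real m) * real m powr betaD N b = C * (ln (real m) * real m powr betaD N b) + a * (2 * ln (real m)) * (2 powr betaD N b * real m powr betaD N b)"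
    unfolding DD_def by (simp add: algebra_simps)
  ultimately show ?thesis unfolding eq by linarith
qed

lemma A_prob2:
  assumes n: "n \<ge> 1" and j: "j \<ge> 2"
  shows "measure (rg_space N c) (A_event N c K n j)
     \<le> real N * DD N b C a * ln (real (n + j)) * real (n + j) powr (betaD N b - alphaD N K * real j)"
proof -
  let ?m = "n + j"
  have mp: "real ?m > 0" using n by simp
  have "measure (rg_space N c) (A_event N c K n j)
     \<le> real N ^ kseq K n * c (kseq K (?m + 1)) * (1 / real N) ^ kseq K ?m"
    using A_prob1[of j n] j by simp
  also have "\<dots> = c (kseq K (?m + 1)) * (real N ^ kseq K n * (1 / real N) ^ kseq K ?m)" by simp
  also have "\<dots> \<le> (DD N b C a * ln (real ?m) * real ?m powr betaD N b) * (real N * real ?m powr (- (alphaD N K * real j)))"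
  proof (rule mult_mono)
    show "c (kseq K (?m + 1)) \<le> DD N b C a * ln (real ?m) * real ?m powr betaD N b" using c_bound[of ?m] n j by simp
    show "real N ^ kseq K n * (1 / real N) ^ kseq K ?m \<le> real N * real ?m powr (- (alphaD N K * real j))"
      using exp_bound[OF N2 Kp n, of ?m] by (simp add: alphaD_def)
    show "0 \<le> DD N b C a * ln (real ?m) * real ?m powr betaD N b" using DD_pos n by simp
    show "0 \<le> real N ^ kseq K n * (1 / real N) ^ kseq K ?m" by simp
  qed
  also have "\<dots> = real N * DD N b C a * ln (real ?m) * (real ?m powr betaD N b * real ?m powr (- (alphaD N K * real j)))"
    by (simp add: algebra_simps)
  also have "real ?m powr betaD N b * real ?m powr (- (alphaD N K * real j)) = real ?m powr (betaD N b - alphaD N K * real j)"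
    by (simp add: powr_add[symmetric])
  finally show ?thesis .
qed

end


lemma ln_le_powr_div:
  fixes x d :: real assumes "x > 0" "d > 0" shows "ln x \<le> x powr d / d"
proof -
  have "ln (x powr d) \<le> x powr d - 1" by (rule ln_le_minus_one) (use assms in simp)
  then have "d * ln x \<le> x powr d" using assms by (simp add: ln_powr)
  then show ?thesis using assms by (simp add: field_simps mult.commute)
qed

context
  fixes N :: nat and K b C a :: real and c :: "nat \<Rightarrow> real"
  assumes N2: "N \<ge> 2" and Kp: "K > 0"
    and bp: "0 < b" and bK: "b < 2 * K - 1 / ln (real N)"
    and C0: "C \<ge> 0" and ap: "a > 0"
    and H7: "\<forall>n\<ge>1. c (kseq K n) = C + a * ln (real n) * real N powr (b * ln (real n))"
    and H8: "\<forall>n\<ge>1. \<forall>j. kseq K n < j \<and> j < kseq K (n + 1) \<longrightarrow>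
             c (kseq K n) \<le> c j \<and> c j \<le> c (kseq K (n + 1))"
begin

abbreviation "bet \<equiv> betaD N b"
abbreviation "alp \<equiv> alphaD N K"
abbreviation "D0 \<equiv> DD N b C a"

lemma P2: "n \<ge> 1 \<Longrightarrow> j \<ge> 2 \<Longrightarrow> measure (rg_space N c) (A_event N c K n j)
     \<le> real N * D0 * ln (real (n + j)) * real (n + j) powr (bet - alp * real j)"
  by (rule A_prob2[OF N2 Kp bp C0 ap H7 H8])

lemma bet_pos: "bet > 0" by (rule beta_pos[OF N2 Kp bp C0 ap H7 H8])
lemma alp_pos: "alp > 0" by (rule alpha_pos[OF N2 Kp bp C0 ap H7 H8])
lemma D0_pos: "D0 > 0" by (rule DD_pos[OF N2 Kp bp C0 ap H7 H8])
lemma lnN_pos: "ln (real N) > 0" using N2 by simp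

lemma limsup_part:
  "\<exists>M>0. \<forall>j\<ge>2.
         limsup (\<lambda>n. ereal (measure (rg_space N c) (A_event N c K n j) /
            (M * ln (real n) / real n powr ((K * real j - b) * ln (real N))))) \<le> 1"
proof (intro exI conjI allI impI)
  define M where "M = real N * D0 * 2 * 2 powr bet"
  show Mp: "M > 0" unfolding M_def using N2 D0_pos by simp
  fix j :: nat assume j: "j \<ge> 2"
  let ?e = "bet - alp * real j"
  show "limsup (\<lambda>n. ereal (measure (rg_space N c) (A_event N c K n j) /
            (M * ln (real n) / real n powr ((K * real j - b) * ln (real N))))) \<le> 1"
  proof (rule Limsup_bounded)
    show "\<forall>\<^sub>F n in sequentially. ereal (measure (rg_space N c) (A_event N c K n j) /
            (M * ln (real n) / real n powr ((K * real j - b) * ln (real N)))) \<le> 1"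
      unfolding eventually_sequentially
    proof (intro exI allI impI)
      fix n assume n: "max j 3 \<le> n"
      have n3: "n \<ge> 3" and nj: "j \<le> n" using n by auto
      have np: "real n > 0" using n3 by simp
      have P: "measure (rg_space N c) (A_event N c K n j)
         \<le> real N * D0 * ln (real (n + j)) * real (n + j) powr ?e"
        using P2[of n j] n3 j by simp
      have l2: "ln (real (n + j)) \<le> 2 * ln (real n)"
      proof -
        have "3 * real n \<le> real n * real n" using n3 by (intro mult_right_mono) auto
        moreover have "real (n + j) \<le> 2 * real n" using nj by simp
        ultimately have "real (n + j) \<le> real n * real n" by linarith
        then have "ln (real (n + j)) \<le> ln (real n * real n)" using np n3 by simp
        also have "\<dots> = 2 * ln (real n)" using np by (simp add: ln_mult)
        finally show ?thesis .
      qed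
      have p2b: "2 powr bet \<ge> 1" using bet_pos by (intro ge_one_powr_ge_zero) auto
      have pe: "real (n + j) powr ?e \<le> 2 powr bet * real n powr ?e"
      proof (cases "?e \<ge> 0")
        case True
        have "real (n + j) powr ?e \<le> (2 * real n) powr ?e"
          using True nj by (intro powr_mono2) auto
        also have "\<dots> = 2 powr ?e * real n powr ?e" by (simp add: powr_mult)
        also have "\<dots> \<le> 2 powr bet * real n powr ?e"
        proof (rule mult_right_mono)
          show "2 powr ?e \<le> 2 powr bet" using alp_pos by (intro powr_mono) auto
        qed simp
        finally show ?thesis .
      next
        case False
        have "real (n + j) powr ?e \<le> real n powr ?e"
          using False np by (intro powr_mono2') auto
        also have "\<dots> \<le> 2 powr bet * real n powr ?e"
          using mult_right_mono[OF p2b, of "real n powr ?e"] by simp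
        finally show ?thesis .
      qed
      have lnn: "ln (real n) > 0" using n3 by simp
      have "real N * D0 * ln (real (n + j)) * real (n + j) powr ?e
          \<le> (real N * D0) * (2 * ln (real n)) * (2 powr bet * real n powr ?e)"
        using l2 pe N2 D0_pos lnn n3 by (intro mult_mono) auto
      also have "\<dots> = M * ln (real n) * real n powr ?e" unfolding M_def by (simp add: algebra_simps)
      finally have P': "measure (rg_space N c) (A_event N c K n j) \<le> M * ln (real n) * real n powr ?e"
        using P by linarith
      have den: "M * ln (real n) / real n powr ((K * real j - b) * ln (real N)) = M * ln (real n) * real n powr ?e"
      proof -
        have "(K * real j - b) * ln (real N) = - ?e" by (simp add: betaD_def alphaD_def algebra_simps)
        moreover have "real n powr (- ?e) = inverse (real n powr ?e)" by (rule powr_minus)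
        ultimately show ?thesis by (simp only: divide_inverse inverse_inverse_eq)
      qed
      have dpos: "M * ln (real n) * real n powr ?e > 0" using Mp lnn np by simp
      have "measure (rg_space N c) (A_event N c K n j) / (M * ln (real n) * real n powr ?e) \<le> 1"
        using P' dpos by simp
      then show "ereal (measure (rg_space N c) (A_event N c K n j) /
            (M * ln (real n) / real n powr ((K * real j - b) * ln (real N)))) \<le> 1"
        unfolding den by simp
    qed
  qed
qed

definition "gam = 2 * alp - bet"
definition "del = (gam - 1) / 2"
definition "rr = 2 powr (- alp)"

lemma gam_gt: "gam > 1"
proof -
  have "b * ln (real N) < (2 * K - 1 / ln (real N)) * ln (real N)"
    using bK lnN_pos by (intro mult_strict_right_mono) auto
  also have "\<dots> = 2 * K * ln (real N) - 1" using lnN_pos by (simp add: algebra_simps)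
  finally show ?thesis unfolding gam_def by (simp add: betaD_def alphaD_def)
qed

lemma del_pos: "del > 0" using gam_gt unfolding del_def by simp

lemma rr: "0 < rr" "rr < 1"
proof -
  show "0 < rr" unfolding rr_def by simp
  have "(2::real) powr (- alp) < 2 powr 0" using alp_pos by (intro powr_less_mono) auto
  then show "rr < 1" unfolding rr_def by simp
qed

definition "uu n = real N * D0 / del * real (Suc n) powr (- (1 + del))"

lemma uu_summable: "summable uu"
proof -
  have "summable (\<lambda>n. real n powr (- (1 + del)))" using del_pos by (subst summable_real_powr_iff) simp
  then have "summable (\<lambda>n. real (Suc n) powr (- (1 + del)))" by (subst summable_Suc_iff)
  then show ?thesis unfolding uu_def by (rule summable_mult)
qed

lemma uu_nonneg: "uu n \<ge> 0" unfolding uu_def using D0_pos del_pos by simp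

lemma rr_summable: "summable (\<lambda>j. rr ^ j)" using rr by (intro summable_geometric) simp

lemma P3: "measure (rg_space N c) (A_event N c K (Suc n) (j + 2)) \<le> uu n * rr ^ j"
proof -
  let ?n = "Suc n" and ?j = "j + 2"
  let ?m = "?n + ?j"
  have mp: "real ?m > 0" by simp
  have m2: "real ?m \<ge> 2" by simp
  have np: "real ?n > 0" by simp
  have A0: "measure (rg_space N c) (A_event N c K ?n ?j)
     \<le> real N * D0 * ln (real ?m) * real ?m powr (bet - alp * real ?j)" by (rule P2) auto
  have e: "real ?m powr (bet - alp * real ?j) = real ?m powr (- (1 + del) - del) * real ?m powr (- alp * real j)"
  proof -
    have "bet - alp * real ?j = (- (1 + del) - del) + (- alp * real j)"
      unfolding del_def gam_def by (simp add: algebra_simps)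
    then show ?thesis by (simp only:) (rule powr_add)
  qed
  have L1: "ln (real ?m) * real ?m powr (bet - alp * real ?j)
       \<le> (real ?m powr del / del) * (real ?m powr (- (1 + del) - del) * real ?m powr (- alp * real j))"
    unfolding e by (rule mult_right_mono[OF ln_le_powr_div[OF mp del_pos]]) simp
  have L2: "(real ?m powr del / del) * (real ?m powr (- (1 + del) - del) * real ?m powr (- alp * real j))
       = (1 / del) * real ?m powr (- (1 + del)) * real ?m powr (- alp * real j)"
  proof -
    have ex: "del + (- (1 + del) - del) = - (1 + del)" by simp
    have "real ?m powr del * real ?m powr (- (1 + del) - del) = real ?m powr (del + (- (1 + del) - del))"
      by (rule powr_add[symmetric])
    also have "\<dots> = real ?m powr (- (1 + del))" by (simp only: ex)
    finally have "real ?m powr del * real ?m powr (- (1 + del) - del) = real ?m powr (- (1 + del))" .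
    then show ?thesis by (simp add: field_simps)
  qed
  have L3: "real ?m powr (- (1 + del)) \<le> real ?n powr (- (1 + del))"
    using del_pos by (intro powr_mono2') auto
  have L4: "real ?m powr (- alp * real j) \<le> rr ^ j"
  proof -
    have "real ?m powr (- alp * real j) \<le> 2 powr (- alp * real j)"
      using alp_pos m2 by (intro powr_mono2') auto
    also have "2 powr (- alp * real j) = rr ^ j"
      unfolding rr_def by (simp add: powr_realpow[symmetric] powr_powr)
    finally show ?thesis .
  qed
  have L5: "(1 / del) * real ?m powr (- (1 + del)) * real ?m powr (- alp * real j)
       \<le> (1 / del) * real ?n powr (- (1 + del)) * rr ^ j"
    using L3 L4 del_pos by (intro mult_mono) auto
  have L: "ln (real ?m) * real ?m powr (bet - alp * real ?j) \<le> (1 / del) * real ?n powr (- (1 + del)) * rr ^ j"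
    using L1 L2 L5 by linarith
  have "real N * D0 * (ln (real ?m) * real ?m powr (bet - alp * real ?j))
      \<le> real N * D0 * ((1 / del) * real ?n powr (- (1 + del)) * rr ^ j)"
    using L N2 D0_pos by (intro mult_left_mono) auto
  also have "\<dots> = uu n * rr ^ j" unfolding uu_def by (simp add: field_simps)
  finally show ?thesis using A0 by (simp add: mult.assoc)
qed


lemma A_meas: "A_event N c K n j \<in> sets (rg_space N c)"
  by (rule A_event_meas) (use N2 in simp)

lemma V_nonneg: "(\<Sum>j. rr ^ j) \<ge> 0"
  by (rule suminf_nonneg[OF rr_summable]) (use rr in simp)

lemma sum_part: "(\<Sum>n. \<Sum>j. emeasure (rg_space N c) (A_event N c K (Suc n) (j + 2))) < \<infinity>"
proof -
  interpret P: prob_space "rg_space N c" by (rule prob_rg)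
  define V where "V = (\<Sum>j. rr ^ j)"
  have V0: "V \<ge> 0" unfolding V_def by (rule V_nonneg)
  have le1: "emeasure (rg_space N c) (A_event N c K (Suc n) (j + 2)) \<le> ennreal (uu n * rr ^ j)" for n j
    unfolding P.emeasure_eq_measure by (rule ennreal_leI[OF P3])
  have inner: "(\<Sum>j. emeasure (rg_space N c) (A_event N c K (Suc n) (j + 2))) \<le> ennreal (uu n * V)" for n
  proof -
    have "(\<Sum>j. emeasure (rg_space N c) (A_event N c K (Suc n) (j + 2))) \<le> (\<Sum>j. ennreal (uu n * rr ^ j))"
      by (rule suminf_le) (use le1 in auto)
    also have "\<dots> = ennreal (\<Sum>j. uu n * rr ^ j)"
      by (rule suminf_ennreal2) (use uu_nonneg rr summable_mult[OF rr_summable] in auto)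
    also have "(\<Sum>j. uu n * rr ^ j) = uu n * V" unfolding V_def by (rule suminf_mult[OF rr_summable])
    finally show ?thesis .
  qed
  have "(\<Sum>n. \<Sum>j. emeasure (rg_space N c) (A_event N c K (Suc n) (j + 2))) \<le> (\<Sum>n. ennreal (uu n * V))"
    by (rule suminf_le) (use inner in auto)
  also have "\<dots> = ennreal (\<Sum>n. uu n * V)"
    by (rule suminf_ennreal2) (use uu_nonneg V0 summable_mult2[OF uu_summable] in auto)
  also have "\<dots> < \<infinity>" by simp
  finally show ?thesis .
qed

lemma ae_part: "AE wt in rg_space N c. \<exists>n0. \<forall>n\<ge>n0. \<forall>j\<ge>2.
         \<forall>x \<in> cluster N (fst wt) (snd wt) (kseq K n) \<inter> annulus N (kseq K (n - 1)) (kseq K n).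
         \<forall>y \<in> annulus N (kseq K (n + j)) (kseq K (n + j + 1)). \<not> adj (fst wt) x y"
proof -
  interpret P: prob_space "rg_space N c" by (rule prob_rg)
  define V where "V = (\<Sum>j. rr ^ j)"
  define F where "F n = (\<Union>j. A_event N c K (Suc n) (j + 2))" for n
  have Fm: "F n \<in> sets (rg_space N c)" for n
    unfolding F_def by (intro sets.countable_UN) (use A_meas in auto)
  have sj: "summable (\<lambda>j. measure (rg_space N c) (A_event N c K (Suc n) (j + 2)))" for n
    by (rule summable_comparison_test'[OF summable_mult[OF rr_summable, of "uu n"], of 0]) (use P3 in simp)
  have Fle: "measure (rg_space N c) (F n) \<le> uu n * V" for n
  proof -
    have "measure (rg_space N c) (F n) \<le> (\<Sum>j. measure (rg_space N c) (A_event N c K (Suc n) (j + 2)))"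
      unfolding F_def by (rule P.finite_measure_subadditive_countably[OF _ sj]) (use A_meas in auto)
    also have "\<dots> \<le> (\<Sum>j. uu n * rr ^ j)"
      by (rule suminf_le[OF _ sj summable_mult[OF rr_summable]]) (use P3 in auto)
    also have "\<dots> = uu n * V" unfolding V_def by (rule suminf_mult[OF rr_summable])
    finally show ?thesis .
  qed
  have sF: "summable (\<lambda>n. measure (rg_space N c) (F n))"
    by (rule summable_comparison_test'[OF summable_mult2[OF uu_summable, of V], of 0]) (use Fle in simp)
  have BC: "AE x in rg_space N c. eventually (\<lambda>n. x \<in> space (rg_space N c) - F n) sequentially"
    by (rule borel_cantelli_AE1[OF Fm _ sF]) (simp add: less_top[symmetric])
  have imp: "AE x in rg_space N c. eventually (\<lambda>n. x \<in> space (rg_space N c) - F n) sequentially \<longrightarrow>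
     (\<exists>n0. \<forall>n\<ge>n0. \<forall>j\<ge>2.
         \<forall>x' \<in> cluster N (fst x) (snd x) (kseq K n) \<inter> annulus N (kseq K (n - 1)) (kseq K n).
         \<forall>y \<in> annulus N (kseq K (n + j)) (kseq K (n + j + 1)). \<not> adj (fst x) x' y)"
  proof (rule AE_I2, rule impI)
    fix z assume "eventually (\<lambda>n. z \<in> space (rg_space N c) - F n) sequentially"
    then obtain N0 where N0: "\<And>n. n \<ge> N0 \<Longrightarrow> z \<in> space (rg_space N c) - F n"
      unfolding eventually_sequentially by blast
    show "\<exists>n0. \<forall>n\<ge>n0. \<forall>j\<ge>2.
         \<forall>x' \<in> cluster N (fst z) (snd z) (kseq K n) \<inter> annulus N (kseq K (n - 1)) (kseq K n).
         \<forall>y \<in> annulus N (kseq K (n + j)) (kseq K (n + j + 1)). \<not> adj (fst z) x' y"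
    proof (intro exI[of _ "Suc N0"] allI impI ballI notI)
      fix n j x' y
      assume n: "Suc N0 \<le> n" and j: "2 \<le> j"
        and x': "x' \<in> cluster N (fst z) (snd z) (kseq K n) \<inter> annulus N (kseq K (n - 1)) (kseq K n)"
        and y: "y \<in> annulus N (kseq K (n + j)) (kseq K (n + j + 1))" and ad: "adj (fst z) x' y"
      have zs: "z \<in> space (rg_space N c)" and zF: "z \<notin> F (n - 1)" using N0[of "n - 1"] n by auto
      have ex: "\<exists>x\<in>cluster N (fst z) (snd z) (kseq K n). \<exists>y\<in>annulus N (kseq K (n + j)) (kseq K (n + j + 1)). adj (fst z) x y"
        using x' y ad by blast
      have "(fst z, snd z) \<in> A_event N c K n j"
        unfolding A_event_def using zs ex by (cases z) simp
      moreover have "Suc (n - 1) = n" "(j - 2) + 2 = j" using n j by auto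
      ultimately have "z \<in> A_event N c K (Suc (n - 1)) ((j - 2) + 2)" by simp
      then have "z \<in> F (n - 1)" unfolding F_def by blast
      then show False using zF by simp
    qed
  qed
  show ?thesis by (rule AE_mp[OF BC imp])
qed

end


theorem lemma5p2:
  fixes N :: nat and K b C a :: real and c :: "nat \<Rightarrow> real"
  assumes "N \<ge> 2" and "K > 0"
    and "0 < b" and "b < 2 * K - 1 / ln (real N)"
    and "C \<ge> 0" and "a > 0"
    and "\<forall>n\<ge>1. c (kseq K n) = C + a * ln (real n) * real N powr (b * ln (real n))"
    and "\<forall>n\<ge>1. \<forall>j. kseq K n < j \<and> j < kseq K (n + 1) \<longrightarrow>
             c (kseq K n) \<le> c j \<and> c j \<le> c (kseq K (n + 1))"
  shows "(\<forall>n j. A_event N c K n j \<in> sets (rg_space N c))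
    \<and> (\<exists>M>0. \<forall>j\<ge>2.
         limsup (\<lambda>n. ereal (measure (rg_space N c) (A_event N c K n j) /
            (M * ln (real n) / real n powr ((K * real j - b) * ln (real N))))) \<le> 1)
    \<and> (\<Sum>n. \<Sum>j. emeasure (rg_space N c) (A_event N c K (Suc n) (j + 2))) < \<infinity>
    \<and> (AE wt in rg_space N c. \<exists>n0. \<forall>n\<ge>n0. \<forall>j\<ge>2.
         \<forall>x \<in> cluster N (fst wt) (snd wt) (kseq K n) \<inter> annulus N (kseq K (n - 1)) (kseq K n).
         \<forall>y \<in> annulus N (kseq K (n + j)) (kseq K (n + j + 1)). \<not> adj (fst wt) x y)"
proof -
  show ?thesis
  proof (intro conjI)
    show "\<forall>n j. A_event N c K n j \<in> sets (rg_space N c)"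
      using A_event_meas[of N c K] assms(1) by simp
    show "\<exists>M>0. \<forall>j\<ge>2.
         limsup (\<lambda>n. ereal (measure (rg_space N c) (A_event N c K n j) /
            (M * ln (real n) / real n powr ((K * real j - b) * ln (real N))))) \<le> 1"
      by (rule limsup_part[OF assms])
    show "(\<Sum>n. \<Sum>j. emeasure (rg_space N c) (A_event N c K (Suc n) (j + 2))) < \<infinity>"
      by (rule sum_part[OF assms])
    show "AE wt in rg_space N c. \<exists>n0. \<forall>n\<ge>n0. \<forall>j\<ge>2.
         \<forall>x \<in> cluster N (fst wt) (snd wt) (kseq K n) \<inter> annulus N (kseq K (n - 1)) (kseq K n).
         \<forall>y \<in> annulus N (kseq K (n + j)) (kseq K (n + j + 1)). \<not> adj (fst wt) x y"
      by (rule ae_part[OF assms])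
  qed
qed

end
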